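(* Let $A=kQ/I$ be a triangular quadratic string algebra and let $n\ge 2$. (a) For every $f\in\mathcal{B}^n_-$, one has $f-f_+\in{\rm Im}\,\delta^{n-1}$. (b) For every $g\in\mathcal{B}^n_+$, one has $g-g_-\in{\rm Im}\,\delta^{n-1}$.
   Context: $k$ is a field, $Q$ a finite quiver without oriented cycles, $I$ an admissible ideal of $kQ$ generated by paths of length 2, $A=kQ/I$; paths are composed left to right, $\overline{x}$ denotes the class of $x$ modulo $I$. String algebra: (S1) $I$ generated by paths; (S2) each vertex is the source of at most two arrows and the target of at most two arrows; (S3) for each arrow $\alpha$ there is at most one arrow $\beta$ with $\alpha\beta\notin I$ and at most one arrow $\gamma$ with $\gamma\alpha\notin I$. For an arrow $\alpha$, $\langle\alpha\rangle$ is the two-sided ideal of $kQ$ generated by $\alpha$ (a path lies in it iff $\alpha$ occurs in it). Let $E$ be the subalgebra of $A$ spanned by the vertex idempotents. Set $\Gamma_0=Q_0$, $\Gamma_1=Q_1$, and for $n\ge2$, $\Gamma_n=\{\alpha_1\cdots\alpha_n : \alpha_i \text{ arrows}, \alpha_i\alpha_{i+1}\in I \text{ for } 1\le i<n\}$; $k\Gamma_n$ is the $E$-$E$-bimodule they span. Let $\mathcal{C}^n=\mathrm{Hom}_{E\text{-}E}(k\Gamma_n,A)$, with differential $\delta^n:\mathcal{C}^n\to\mathcal{C}^{n+1}$, $(\delta^n\phi)(\alpha_1\cdots\alpha_{n+1})=\overline{\alpha_1}\,\phi(\alpha_2\cdots\alpha_{n+1})+(-1)^{n+1}\phi(\alpha_1\cdots\alpha_n)\,\overline{\alpha_{n+1}}$.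 A basis of $\mathcal{C}^n$ consists of the pairs $(\alpha_1\cdots\alpha_n,\overline{p})$ with $\alpha_1\cdots\alpha_n\in\Gamma_n$ and $p\notin I$ a path from $s(\alpha_1)$ to $t(\alpha_n)$; this pair denotes the map sending $\alpha_1\cdots\alpha_n$ to $\overline p$ and all other elements of $\Gamma_n$ to $0$. $\mathcal{B}^n_-$ is the set of basis elements of the form $(\alpha_1\cdots\alpha_n,\overline{\alpha_1p})$; $\mathcal{B}^n_0$ those $(\alpha_1\cdots\alpha_n,\overline w)$ with $w\notin\langle\alpha_1\rangle$, $w\notin\langle\alpha_n\rangle$; $\mathcal{B}^n_+$ those $(\alpha_1\cdots\alpha_n,\overline{q\alpha_n})$ with $q\notin\langle\alpha_1\rangle$. For $f=(\alpha_1\cdots\alpha_n,\overline{\alpha_1p})\in\mathcal{B}^n_-$, define $f_+\in\mathcal{C}^n$ by $f_+(\alpha_2\cdots\alpha_{n+1})=(-1)^{n+1}\overline{p\alpha_{n+1}}$ for every arrow $\alpha_{n+1}$ with $\alpha_2\cdots\alpha_{n+1}\in\Gamma_n$, and $f_+=0$ on all other elements of $\Gamma_n$. For $g=(\alpha_1\cdots\alpha_n,\overline{q\alpha_n})\in\mathcal{B}^n_+$, define $g_-\in\mathcal{C}^n$ by $g_-(\alpha_0\alpha_1\cdots\alpha_{n-1})=(-1)^{n+1}\overline{\alpha_0q}$ for every arrow $\alpha_0$ with $\alpha_0\alpha_1\cdots\alpha_{n-1}\in\Gamma_n$, and $g_-=0$ on all other elements of $\Gamma_n$. *)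

theory Defs
  imports Main
begin

text \<open>A bound quiver with monomial quadratic relations: vertices, arrows, source,
 target, and the set of length-2 paths (pairs of arrows) generating the ideal I.
 Paths are pairs (v, xs): starting vertex v and the list of arrows, composed left to right;
 (v, []) is the trivial path e_v.\<close>
record ('v, 'a) bquiver =
  verts :: "'v set"
  arrs  :: "'a set"
  src   :: "'a \<Rightarrow> 'v"
  tgt   :: "'a \<Rightarrow> 'v"
  rels  :: "('a \<times> 'a) set"

definition is_path :: "('v, 'a) bquiver \<Rightarrow> 'v \<times> 'a list \<Rightarrow> bool" where
  "is_path Q p \<longleftrightarrow> (case p of (v, xs) \<Rightarrow>
     v \<in> verts Q \<and> set xs \<subseteq> arrs Q \<and> (xs \<noteq> [] \<longrightarrow> src Q (hd xs) = v) \<and>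
     (\<forall>i. Suc i < length xs \<longrightarrow> tgt Q (xs ! i) = src Q (xs ! Suc i)))"

definition path_tgt :: "('v, 'a) bquiver \<Rightarrow> 'v \<times> 'a list \<Rightarrow> 'v" where
  "path_tgt Q p = (case p of (v, xs) \<Rightarrow> if xs = [] then v else tgt Q (last xs))"

definition nonzero_path :: "('v, 'a) bquiver \<Rightarrow> 'v \<times> 'a list \<Rightarrow> bool" where
  "nonzero_path Q p \<longleftrightarrow> is_path Q p \<and>
     (\<forall>i. Suc i < length (snd p) \<longrightarrow> (snd p ! i, snd p ! Suc i) \<notin> rels Q)"

definition tqsa :: "('v, 'a) bquiver \<Rightarrow> bool" where
  "tqsa Q \<longleftrightarrow>
     finite (verts Q) \<and> finite (arrs Q) \<and>
     (\<forall>\<alpha>\<in>arrs Q. src Q \<alpha> \<in> verts Q \<and> tgt Q \<alpha> \<in> verts Q) \<and>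
     rels Q \<subseteq> {(\<alpha>, \<beta>). \<alpha> \<in> arrs Q \<and> \<beta> \<in> arrs Q \<and> tgt Q \<alpha> = src Q \<beta>} \<and>
     \<comment> \<open>no oriented cycles\<close>
     (\<forall>v xs. is_path Q (v, xs) \<and> xs \<noteq> [] \<longrightarrow> path_tgt Q (v, xs) \<noteq> v) \<and>
     \<comment> \<open>(S2)\<close>
     (\<forall>v\<in>verts Q. card {\<alpha>\<in>arrs Q. src Q \<alpha> = v} \<le> 2 \<and> card {\<alpha>\<in>arrs Q. tgt Q \<alpha> = v} \<le> 2) \<and>
     \<comment> \<open>(S3)\<close>
     (\<forall>\<alpha>\<in>arrs Q.
        card {\<beta>\<in>arrs Q. tgt Q \<alpha> = src Q \<beta> \<and> (\<alpha>, \<beta>) \<notin> rels Q} \<le> 1 \<and>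
        card {\<gamma>\<in>arrs Q. tgt Q \<gamma> = src Q \<alpha> \<and> (\<gamma>, \<alpha>) \<notin> rels Q} \<le> 1)"

definition Gamma :: "('v, 'a) bquiver \<Rightarrow> nat \<Rightarrow> 'a list set" where
  "Gamma Q n = {xs. length xs = n \<and> set xs \<subseteq> arrs Q \<and>
     (\<forall>i. Suc i < n \<longrightarrow> tgt Q (xs ! i) = src Q (xs ! Suc i) \<and> (xs ! i, xs ! Suc i) \<in> rels Q)}"

text \<open>Elements of A are coefficient functions on paths; cls Q p is the class of the path p.\<close>
definition cls :: "('v, 'a) bquiver \<Rightarrow> 'v \<times> 'a list \<Rightarrow> 'v \<times> 'a list \<Rightarrow> 'k::field" where
  "cls Q p = (\<lambda>q. if q = p \<and> nonzero_path Q p then 1 else 0)"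

definition lmult :: "('v, 'a) bquiver \<Rightarrow> 'a \<Rightarrow> ('v \<times> 'a list \<Rightarrow> 'k::field) \<Rightarrow> 'v \<times> 'a list \<Rightarrow> 'k" where
  "lmult Q \<alpha> x = (\<lambda>(w, zs). if nonzero_path Q (w, zs) \<and> zs \<noteq> [] \<and> hd zs = \<alpha>
                              then x (tgt Q \<alpha>, tl zs) else 0)"

definition rmult :: "('v, 'a) bquiver \<Rightarrow> ('v \<times> 'a list \<Rightarrow> 'k::field) \<Rightarrow> 'a \<Rightarrow> 'v \<times> 'a list \<Rightarrow> 'k" where
  "rmult Q x \<beta> = (\<lambda>(w, zs). if nonzero_path Q (w, zs) \<and> zs \<noteq> [] \<and> last zs = \<beta>
                              then x (w, butlast zs) else 0)"

text \<open>Cochains in C^m (m >= 1): E-E-bimodule maps kGamma_m -> A, i.e. each element of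
 Gamma_m is sent to a combination of nonzero paths parallel to it.\<close>
definition cochain :: "('v, 'a) bquiver \<Rightarrow> nat \<Rightarrow> ('a list \<Rightarrow> 'v \<times> 'a list \<Rightarrow> 'k::field) \<Rightarrow> bool" where
  "cochain Q m \<phi> \<longleftrightarrow> (\<forall>\<gamma> q. \<phi> \<gamma> q \<noteq> 0 \<longrightarrow>
      \<gamma> \<in> Gamma Q m \<and> nonzero_path Q q \<and> fst q = src Q (hd \<gamma>) \<and> path_tgt Q q = tgt Q (last \<gamma>))"

definition delta :: "('v, 'a) bquiver \<Rightarrow> nat \<Rightarrow> ('a list \<Rightarrow> 'v \<times> 'a list \<Rightarrow> 'k::field)
                     \<Rightarrow> 'a list \<Rightarrow> 'v \<times> 'a list \<Rightarrow> 'k" where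
  "delta Q m \<phi> = (\<lambda>\<gamma> q. if \<gamma> \<in> Gamma Q (Suc m)
       then lmult Q (hd \<gamma>) (\<phi> (tl \<gamma>)) q + (-1) ^ Suc m * rmult Q (\<phi> (butlast \<gamma>)) (last \<gamma>) q
       else 0)"

definition basis_elem :: "('v, 'a) bquiver \<Rightarrow> 'a list \<Rightarrow> 'v \<times> 'a list \<Rightarrow> 'a list \<Rightarrow> 'v \<times> 'a list \<Rightarrow> 'k::field" where
  "basis_elem Q \<gamma> p = (\<lambda>\<gamma>' q. if \<gamma>' = \<gamma> then cls Q p q else 0)"

text \<open>f = (alpha_1...alpha_n, class of alpha_1 p) in B^n_-, where p = (t alpha_1, ys).\<close>
definition in_Bminus :: "('v, 'a) bquiver \<Rightarrow> nat \<Rightarrow> 'a list \<Rightarrow> 'a list \<Rightarrow> bool" where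
  "in_Bminus Q n \<gamma> ys \<longleftrightarrow> \<gamma> \<in> Gamma Q n \<and>
     nonzero_path Q (src Q (hd \<gamma>), hd \<gamma> # ys) \<and>
     path_tgt Q (src Q (hd \<gamma>), hd \<gamma> # ys) = tgt Q (last \<gamma>)"

definition f_plus :: "('v, 'a) bquiver \<Rightarrow> nat \<Rightarrow> 'a list \<Rightarrow> 'a list \<Rightarrow> 'a list \<Rightarrow> 'v \<times> 'a list \<Rightarrow> 'k::field" where
  "f_plus Q n \<gamma> ys = (\<lambda>\<gamma>' q. if \<gamma>' \<in> Gamma Q n \<and> butlast \<gamma>' = tl \<gamma>
       then (-1) ^ (n + 1) * cls Q (tgt Q (hd \<gamma>), ys @ [last \<gamma>']) q else 0)"

text \<open>g = (alpha_1...alpha_n, class of q alpha_n) in B^n_+, where q = (s alpha_1, zs), q not in <alpha_1>.\<close>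
definition in_Bplus :: "('v, 'a) bquiver \<Rightarrow> nat \<Rightarrow> 'a list \<Rightarrow> 'a list \<Rightarrow> bool" where
  "in_Bplus Q n \<gamma> zs \<longleftrightarrow> \<gamma> \<in> Gamma Q n \<and>
     nonzero_path Q (src Q (hd \<gamma>), zs @ [last \<gamma>]) \<and>
     path_tgt Q (src Q (hd \<gamma>), zs @ [last \<gamma>]) = tgt Q (last \<gamma>) \<and>
     hd \<gamma> \<notin> set zs"

definition g_minus :: "('v, 'a) bquiver \<Rightarrow> nat \<Rightarrow> 'a list \<Rightarrow> 'a list \<Rightarrow> 'a list \<Rightarrow> 'v \<times> 'a list \<Rightarrow> 'k::field" where
  "g_minus Q n \<gamma> zs = (\<lambda>\<gamma>' q. if \<gamma>' \<in> Gamma Q n \<and> tl \<gamma>' = butlast \<gamma>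
       then (-1) ^ (n + 1) * cls Q (src Q (hd \<gamma>'), hd \<gamma>' # zs) q else 0)"

definition in_image_delta :: "('v, 'a) bquiver \<Rightarrow> nat \<Rightarrow> ('a list \<Rightarrow> 'v \<times> 'a list \<Rightarrow> 'k::field) \<Rightarrow> bool" where
  "in_image_delta Q n F \<longleftrightarrow> (\<exists>\<phi>. cochain Q (n - 1) \<phi> \<and> delta Q (n - 1) \<phi> = F)"

end

theory Submission
  imports Defs
begin


lemma tq_arr: "tqsa Q \<Longrightarrow> a \<in> arrs Q \<Longrightarrow> src Q a \<in> verts Q \<and> tgt Q a \<in> verts Q"
  unfolding tqsa_def by blast

lemma nz_hd: "nonzero_path Q (w, a # xs) \<Longrightarrow> w = src Q a \<and> a \<in> arrs Q"
  unfolding nonzero_path_def is_path_def by auto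

lemma nz_cons2: "nonzero_path Q (w, a # b # xs) \<Longrightarrow> tgt Q a = src Q b \<and> (a, b) \<notin> rels Q \<and> b \<in> arrs Q"
  unfolding nonzero_path_def is_path_def
  apply (elim conjE)
  apply (drule spec[of _ 0])+
  by auto

lemma nz_suffix:
  assumes tq: "tqsa Q" and nz: "nonzero_path Q (w, a # xs)"
  shows "nonzero_path Q (tgt Q a, xs)"
proof -
  have a: "a \<in> arrs Q" using nz_hd[OF nz] by simp
  have P: "set xs \<subseteq> arrs Q"
    and C: "\<forall>i. Suc i < length (a # xs) \<longrightarrow> tgt Q ((a # xs) ! i) = src Q ((a # xs) ! Suc i)"
    and R: "\<forall>i. Suc i < length (a # xs) \<longrightarrow> ((a # xs) ! i, (a # xs) ! Suc i) \<notin> rels Q"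
    using nz unfolding nonzero_path_def is_path_def by auto
  have v: "tgt Q a \<in> verts Q" using tq_arr[OF tq a] by simp
  have h: "xs \<noteq> [] \<longrightarrow> src Q (hd xs) = tgt Q a"
  proof
    assume "xs \<noteq> []"
    then have "Suc 0 < length (a # xs)" by simp
    with C have "tgt Q a = src Q (xs ! 0)" by fastforce
    then show "src Q (hd xs) = tgt Q a" using \<open>xs \<noteq> []\<close> by (simp add: hd_conv_nth)
  qed
  have c: "\<forall>i. Suc i < length xs \<longrightarrow> tgt Q (xs ! i) = src Q (xs ! Suc i)"
  proof (intro allI impI)
    fix i assume "Suc i < length xs"
    then have "Suc (Suc i) < length (a # xs)" by simp
    with C have "tgt Q ((a # xs) ! Suc i) = src Q ((a # xs) ! Suc (Suc i))" by blast
    then show "tgt Q (xs ! i) = src Q (xs ! Suc i)" by simp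
  qed
  have r: "\<forall>i. Suc i < length xs \<longrightarrow> (xs ! i, xs ! Suc i) \<notin> rels Q"
  proof (intro allI impI)
    fix i assume "Suc i < length xs"
    then have "Suc (Suc i) < length (a # xs)" by simp
    with R have "((a # xs) ! Suc i, (a # xs) ! Suc (Suc i)) \<notin> rels Q" by blast
    then show "(xs ! i, xs ! Suc i) \<notin> rels Q" by simp
  qed
  show ?thesis unfolding nonzero_path_def is_path_def using v P h c r by simp
qed

lemma nz_prefix:
  assumes nz: "nonzero_path Q (w, xs @ ys)"
  shows "nonzero_path Q (w, xs)"
proof -
  have v: "w \<in> verts Q" and P: "set xs \<subseteq> arrs Q"
    and H: "xs @ ys \<noteq> [] \<longrightarrow> src Q (hd (xs @ ys)) = w"
    and C: "\<forall>i. Suc i < length (xs @ ys) \<longrightarrow> tgt Q ((xs @ ys) ! i) = src Q ((xs @ ys) ! Suc i)"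
    and R: "\<forall>i. Suc i < length (xs @ ys) \<longrightarrow> ((xs @ ys) ! i, (xs @ ys) ! Suc i) \<notin> rels Q"
    using nz unfolding nonzero_path_def is_path_def by auto
  have h: "xs \<noteq> [] \<longrightarrow> src Q (hd xs) = w" using H by auto
  have c: "\<forall>i. Suc i < length xs \<longrightarrow> tgt Q (xs ! i) = src Q (xs ! Suc i)"
  proof (intro allI impI)
    fix i assume i: "Suc i < length xs"
    then have "Suc i < length (xs @ ys)" by simp
    with C have "tgt Q ((xs @ ys) ! i) = src Q ((xs @ ys) ! Suc i)" by blast
    then show "tgt Q (xs ! i) = src Q (xs ! Suc i)" using i by (simp add: nth_append)
  qed
  have r: "\<forall>i. Suc i < length xs \<longrightarrow> (xs ! i, xs ! Suc i) \<notin> rels Q"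
  proof (intro allI impI)
    fix i assume i: "Suc i < length xs"
    then have "Suc i < length (xs @ ys)" by simp
    with R have "((xs @ ys) ! i, (xs @ ys) ! Suc i) \<notin> rels Q" by blast
    then show "(xs ! i, xs ! Suc i) \<notin> rels Q" using i by (simp add: nth_append)
  qed
  show ?thesis unfolding nonzero_path_def is_path_def using v P h c r by simp
qed

lemma nz_snoc2:
  assumes "nonzero_path Q (w, xs @ [b])" "xs \<noteq> []"
  shows "tgt Q (last xs) = src Q b \<and> (last xs, b) \<notin> rels Q \<and> last xs \<in> arrs Q"
proof -
  obtain ys a where xs: "xs = ys @ [a]" using assms(2) by (metis rev_exhaust)
  have "Suc (length ys) < length (xs @ [b])" using xs by simp
  then show ?thesis using assms(1) xs unfolding nonzero_path_def is_path_def
    by (auto simp: nth_append)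
qed

lemma Gamma_len: "xs \<in> Gamma Q m \<Longrightarrow> length xs = m" unfolding Gamma_def by auto

lemma Gamma_nth: "xs \<in> Gamma Q m \<Longrightarrow> Suc i < m \<Longrightarrow> tgt Q (xs ! i) = src Q (xs ! Suc i) \<and> (xs ! i, xs ! Suc i) \<in> rels Q"
  unfolding Gamma_def by auto

lemma in_set_tlD: "x \<in> set (tl xs) \<Longrightarrow> x \<in> set xs" by (cases xs) auto

lemma Gamma_tl: "xs \<in> Gamma Q m \<Longrightarrow> tl xs \<in> Gamma Q (m - 1)"
  unfolding Gamma_def by (auto simp: nth_tl dest: in_set_tlD)

lemma Gamma_butlast: "xs \<in> Gamma Q m \<Longrightarrow> butlast xs \<in> Gamma Q (m - 1)"
  unfolding Gamma_def by (auto simp: nth_butlast dest: in_set_butlastD)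

lemma Gamma_path: "tqsa Q \<Longrightarrow> xs \<in> Gamma Q m \<Longrightarrow> xs \<noteq> [] \<Longrightarrow> is_path Q (src Q (hd xs), xs)"
proof -
  assume h: "tqsa Q" "xs \<in> Gamma Q m" "xs \<noteq> []"
  have "hd xs \<in> arrs Q" using h unfolding Gamma_def by (auto dest: hd_in_set)
  then show ?thesis using h tq_arr[OF h(1)] unfolding is_path_def Gamma_def by auto
qed

lemma path_tgt_ne: "xs \<noteq> [] \<Longrightarrow> path_tgt Q (v, xs) = tgt Q (last xs)"
  unfolding path_tgt_def by auto

lemma acyc: "tqsa Q \<Longrightarrow> is_path Q (v, xs) \<Longrightarrow> xs \<noteq> [] \<Longrightarrow> tgt Q (last xs) \<noteq> v"
  unfolding tqsa_def path_tgt_def by force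

lemma tq_fin: "tqsa Q \<Longrightarrow> finite (arrs Q)" unfolding tqsa_def by blast

lemma tq_S3: "tqsa Q \<Longrightarrow> \<alpha> \<in> arrs Q \<Longrightarrow>
        card {\<beta>\<in>arrs Q. tgt Q \<alpha> = src Q \<beta> \<and> (\<alpha>, \<beta>) \<notin> rels Q} \<le> 1 \<and>
        card {\<gamma>\<in>arrs Q. tgt Q \<gamma> = src Q \<alpha> \<and> (\<gamma>, \<alpha>) \<notin> rels Q} \<le> 1"
  unfolding tqsa_def by blast

lemma S3_left: "tqsa Q \<Longrightarrow> b \<in> arrs Q \<Longrightarrow> a1 \<in> arrs Q \<Longrightarrow> a2 \<in> arrs Q \<Longrightarrow>
   tgt Q a1 = src Q b \<Longrightarrow> tgt Q a2 = src Q b \<Longrightarrow> (a1, b) \<notin> rels Q \<Longrightarrow> (a2, b) \<notin> rels Q \<Longrightarrow> a1 = a2"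
proof -
  assume h: "tqsa Q" "b \<in> arrs Q" "a1 \<in> arrs Q" "a2 \<in> arrs Q"
   "tgt Q a1 = src Q b" "tgt Q a2 = src Q b" "(a1, b) \<notin> rels Q" "(a2, b) \<notin> rels Q"
  let ?S = "{\<gamma>\<in>arrs Q. tgt Q \<gamma> = src Q b \<and> (\<gamma>, b) \<notin> rels Q}"
  have c: "card ?S \<le> Suc 0" using tq_S3[OF h(1,2)] by simp
  have f: "finite ?S" using tq_fin[OF h(1)] by simp
  have m: "a1 \<in> ?S" "a2 \<in> ?S" using h by simp_all
  have "\<forall>x\<in>?S. \<forall>y\<in>?S. x = y" using card_le_Suc0_iff_eq[OF f] c by blast
  then show ?thesis using m by blast
qed

lemma S3_right: "tqsa Q \<Longrightarrow> a \<in> arrs Q \<Longrightarrow> b1 \<in> arrs Q \<Longrightarrow> b2 \<in> arrs Q \<Longrightarrow>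
   tgt Q a = src Q b1 \<Longrightarrow> tgt Q a = src Q b2 \<Longrightarrow> (a, b1) \<notin> rels Q \<Longrightarrow> (a, b2) \<notin> rels Q \<Longrightarrow> b1 = b2"
proof -
  assume h: "tqsa Q" "a \<in> arrs Q" "b1 \<in> arrs Q" "b2 \<in> arrs Q"
   "tgt Q a = src Q b1" "tgt Q a = src Q b2" "(a, b1) \<notin> rels Q" "(a, b2) \<notin> rels Q"
  let ?S = "{\<beta>\<in>arrs Q. tgt Q a = src Q \<beta> \<and> (a, \<beta>) \<notin> rels Q}"
  have c: "card ?S \<le> Suc 0" using tq_S3[OF h(1,2)] by simp
  have f: "finite ?S" using tq_fin[OF h(1)] by simp
  have m: "b1 \<in> ?S" "b2 \<in> ?S" using h by simp_all
  have "\<forall>x\<in>?S. \<forall>y\<in>?S. x = y" using card_le_Suc0_iff_eq[OF f] c by blast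
  then show ?thesis using m by blast
qed

lemma lmult_app: "lmult Q x F (w, zs) = (if nonzero_path Q (w, zs) \<and> zs \<noteq> [] \<and> hd zs = x then F (tgt Q x, tl zs) else 0)"
  by (simp add: lmult_def)

lemma rmult_app: "rmult Q F x (w, zs) = (if nonzero_path Q (w, zs) \<and> zs \<noteq> [] \<and> last zs = x then F (w, butlast zs) else 0)"
  by (simp add: rmult_def)

lemma cls_app: "cls Q p q = (if q = p \<and> nonzero_path Q p then 1 else 0)"
  by (simp add: cls_def)

lemma basis_app: "basis_elem Q g p g' q = (if g' = g then cls Q p q else 0)"
  by (simp add: basis_elem_def)



lemma partA:
  fixes Q :: "('v, 'a) bquiver" and n :: nat
  assumes tq: "tqsa Q" and n2: "2 \<le> n" and B: "in_Bminus Q n \<gamma> ys"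
  shows "in_image_delta Q n
    ((basis_elem Q \<gamma> (src Q (hd \<gamma>), hd \<gamma> # ys) :: 'a list \<Rightarrow> 'v \<times> 'a list \<Rightarrow> 'k::field)
     - f_plus Q n \<gamma> ys)"
proof -
  define a where "a = hd \<gamma>"
  have G: "\<gamma> \<in> Gamma Q n" and nz: "nonzero_path Q (src Q a, a # ys)"
    and pt: "path_tgt Q (src Q a, a # ys) = tgt Q (last \<gamma>)"
    using B unfolding in_Bminus_def a_def by auto
  have len: "length \<gamma> = n" using G Gamma_len by blast
  have gne: "\<gamma> \<noteq> []" and tlne: "tl \<gamma> \<noteq> []" using len n2 by (auto simp: tl_Nil)
  have gcons: "\<gamma> = a # tl \<gamma>" using gne a_def by simp
  have Gt: "tl \<gamma> \<in> Gamma Q (n - 1)" using Gamma_tl[OF G] .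
  have a_arr: "a \<in> arrs Q" using nz_hd[OF nz] by simp
  have h1: "tgt Q a = src Q (hd (tl \<gamma>))"
    using Gamma_nth[OF G, of 0] n2 gne tlne a_def by (cases \<gamma>) (auto simp: hd_conv_nth)
  have lt: "last (tl \<gamma>) = last \<gamma>" using tlne by (simp add: last_tl)
  have nzy: "nonzero_path Q (tgt Q a, ys)" using nz_suffix[OF tq nz] .
  have ysne: "ys \<noteq> []"
  proof
    assume "ys = []"
    then have "tgt Q a = tgt Q (last \<gamma>)" using pt by (simp add: path_tgt_def)
    moreover have "is_path Q (tgt Q a, tl \<gamma>)" using Gamma_path[OF tq Gt tlne] h1 by simp
    ultimately show False using acyc[OF tq _ tlne] lt by metis
  qed
  have pty: "path_tgt Q (tgt Q a, ys) = tgt Q (last (tl \<gamma>))"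
    using pt ysne lt by (simp add: path_tgt_def)
  define \<phi> :: "'a list \<Rightarrow> 'v \<times> 'a list \<Rightarrow> 'k" where "\<phi> = basis_elem Q (tl \<gamma>) (tgt Q a, ys)"
  have coch: "cochain Q (n - 1) \<phi>"
    unfolding cochain_def \<phi>_def basis_elem_def cls_def
    using Gt nzy h1 pty by (auto split: if_splits)
  have sgn: "(-1::'k) ^ Suc (n - 1) = - ((-1) ^ (n + 1))" using n2
  proof -
    have "Suc (n - 1) = n" using n2 by simp
    then show ?thesis by simp
  qed
  have main: "delta Q (n - 1) \<phi> \<beta> (w, zs) =
     (basis_elem Q \<gamma> (src Q a, a # ys) - f_plus Q n \<gamma> ys) \<beta> (w, zs)" for \<beta> w zs
  proof (cases "\<beta> \<in> Gamma Q n")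
    case False
    then show ?thesis unfolding delta_def basis_elem_def f_plus_def using G n2
      by (auto simp: Suc_diff_1)
  next
    case True
    have lenb: "length \<beta> = n" using True Gamma_len by blast
    have bne: "\<beta> \<noteq> []" using lenb n2 by auto
    have L: "lmult Q (hd \<beta>) (\<phi> (tl \<beta>)) (w, zs) = basis_elem Q \<gamma> (src Q a, a # ys) \<beta> (w, zs)"
    proof (cases "\<beta> = \<gamma>")
      case True
      have "lmult Q (hd \<beta>) (\<phi> (tl \<beta>)) (w, zs) = (if nonzero_path Q (w, zs) \<and> zs \<noteq> [] \<and> hd zs = a
          then cls Q (tgt Q a, ys) (tgt Q a, tl zs) else 0)"
        by (simp add: lmult_app \<phi>_def basis_app True a_def)
      then show ?thesis
        by (cases zs) (auto simp: cls_app basis_app True nzy nz dest: nz_hd)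
    next
      case False
      show ?thesis
      proof (cases "tl \<beta> = tl \<gamma>")
        case False
        then show ?thesis using \<open>\<beta> \<noteq> \<gamma>\<close> by (simp add: lmult_app \<phi>_def basis_app)
      next
        case True
        have hb: "hd \<beta> \<noteq> a" using True \<open>\<beta> \<noteq> \<gamma>\<close> bne gne a_def by (cases \<beta>; cases \<gamma>) auto
        have "\<not> nonzero_path Q (w, hd \<beta> # ys)"
        proof
          assume nb: "nonzero_path Q (w, hd \<beta> # ys)"
          obtain y ys' where yy: "ys = y # ys'" using ysne by (meson neq_Nil_conv)
          have c1: "tgt Q (hd \<beta>) = src Q y \<and> (hd \<beta>, y) \<notin> rels Q \<and> y \<in> arrs Q"
            using nz_cons2[of Q w "hd \<beta>" y ys'] nb yy by simp
          have c2: "tgt Q a = src Q y \<and> (a, y) \<notin> rels Q"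
            using nz_cons2[of Q "src Q a" a y ys'] nz yy by simp
          have harr: "hd \<beta> \<in> arrs Q" using nz_hd[OF nb] by simp
          have "a = hd \<beta>" using S3_left[OF tq, of y a "hd \<beta>"] c1 c2 a_arr harr by blast
          then show False using hb by simp
        qed
        moreover have "lmult Q (hd \<beta>) (\<phi> (tl \<beta>)) (w, zs) = (if nonzero_path Q (w, zs) \<and> zs \<noteq> [] \<and> hd zs = hd \<beta>
          then cls Q (tgt Q a, ys) (tgt Q (hd \<beta>), tl zs) else 0)"
          by (simp add: lmult_app \<phi>_def basis_app True)
        ultimately show ?thesis using \<open>\<beta> \<noteq> \<gamma>\<close>
          by (cases zs) (auto simp: cls_app basis_app)
      qed
    qed
    have R: "rmult Q (\<phi> (butlast \<beta>)) (last \<beta>) (w, zs) =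
      (if butlast \<beta> = tl \<gamma> then cls Q (tgt Q a, ys @ [last \<beta>]) (w, zs) else 0)"
    proof (cases "butlast \<beta> = tl \<gamma>")
      case False
      then show ?thesis by (simp add: rmult_app \<phi>_def basis_app)
    next
      case True
      have e: "rmult Q (\<phi> (butlast \<beta>)) (last \<beta>) (w, zs) = (if nonzero_path Q (w, zs) \<and> zs \<noteq> [] \<and> last zs = last \<beta>
          then cls Q (tgt Q a, ys) (w, butlast zs) else 0)"
        by (simp add: rmult_app \<phi>_def basis_app True)
      show ?thesis
      proof (cases zs rule: rev_cases)
        case Nil
        then show ?thesis using e by (simp add: cls_app)
      next
        case (snoc zs' z)
        then show ?thesis using e True nzy nz_prefix[of Q "tgt Q a" ys "[last \<beta>]"]
          by (auto simp: cls_app)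
      qed
    qed
    show ?thesis
      using True L R sgn a_def n2
      by (cases "butlast \<beta> = tl \<gamma>") (simp_all add: delta_def f_plus_def Suc_diff_1)
  qed
  have "delta Q (n - 1) \<phi> = basis_elem Q \<gamma> (src Q a, a # ys) - f_plus Q n \<gamma> ys"
  proof (intro ext)
    fix \<beta> :: "'a list" and q :: "'v \<times> 'a list"
    obtain w zs where "q = (w, zs)" by (cases q)
    then show "delta Q (n - 1) \<phi> \<beta> q = (basis_elem Q \<gamma> (src Q a, a # ys) - f_plus Q n \<gamma> ys) \<beta> q"
      using main by simp
  qed
  then show ?thesis unfolding in_image_delta_def using coch a_def by blast
qed



lemma partB:
  fixes Q :: "('v, 'a) bquiver" and n :: nat
  assumes tq: "tqsa Q" and n2: "2 \<le> n" and B: "in_Bplus Q n \<gamma> zs"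
  shows "in_image_delta Q n
    ((basis_elem Q \<gamma> (src Q (hd \<gamma>), zs @ [last \<gamma>]) :: 'a list \<Rightarrow> 'v \<times> 'a list \<Rightarrow> 'k::field)
     - g_minus Q n \<gamma> zs)"
proof -
  define a where "a = hd \<gamma>"
  define b where "b = last \<gamma>"
  have G: "\<gamma> \<in> Gamma Q n" and nz: "nonzero_path Q (src Q a, zs @ [b])"
    using B unfolding in_Bplus_def a_def b_def by auto
  have len: "length \<gamma> = n" using G Gamma_len by blast
  have gne: "\<gamma> \<noteq> []" using len n2 by auto
  have "length (butlast \<gamma>) = n - 1" using len by simp
  then have blne: "butlast \<gamma> \<noteq> []" using n2 by (metis One_nat_def Suc_1 diff_is_0_eq list.size(3) not_less_eq_eq)
  have Gb: "butlast \<gamma> \<in> Gamma Q (n - 1)" using Gamma_butlast[OF G] .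
  have hb: "hd (butlast \<gamma>) = a" using a_def len n2
    by (metis blne hd_append2 append_butlast_last_id gne)
  have h1: "tgt Q (last (butlast \<gamma>)) = src Q b"
  proof -
    have "Suc (n - 2) < n" using n2 by simp
    from Gamma_nth[OF G this] have "tgt Q (\<gamma> ! (n - 2)) = src Q (\<gamma> ! Suc (n - 2))" by simp
    moreover have "last (butlast \<gamma>) = \<gamma> ! (n - 2)" using len n2 blne
      by (simp add: last_conv_nth nth_butlast numeral_2_eq_2)
    moreover have "\<gamma> ! Suc (n - 2) = b" using len n2 gne b_def
      by (simp add: last_conv_nth Suc_diff_Suc numeral_2_eq_2)
    ultimately show ?thesis by simp
  qed
  have nzz: "nonzero_path Q (src Q a, zs)" using nz_prefix[OF nz] .
  have zsne: "zs \<noteq> []"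
  proof
    assume "zs = []"
    then have "src Q b = src Q a" using nz_hd[of Q "src Q a" b "[]"] nz by simp
    moreover have "is_path Q (src Q a, butlast \<gamma>)" using Gamma_path[OF tq Gb blne] hb by simp
    ultimately show False using acyc[OF tq _ blne] h1 by metis
  qed
  have lz: "tgt Q (last zs) = src Q b \<and> (last zs, b) \<notin> rels Q \<and> last zs \<in> arrs Q"
    using nz_snoc2[OF nz zsne] .
  have ptz: "path_tgt Q (src Q a, zs) = tgt Q (last (butlast \<gamma>))"
    using zsne lz h1 by (simp add: path_tgt_def)
  define \<phi> :: "'a list \<Rightarrow> 'v \<times> 'a list \<Rightarrow> 'k" where
    "\<phi> = (\<lambda>x q. (-1) ^ n * basis_elem Q (butlast \<gamma>) (src Q a, zs) x q)"
  have coch: "cochain Q (n - 1) \<phi>"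
    unfolding cochain_def \<phi>_def basis_elem_def cls_def
    using Gb nzz hb ptz by (auto split: if_splits)
  have sn: "Suc (n - 1) = n" using n2 by simp
  have main: "delta Q (n - 1) \<phi> \<beta> (w, ws) =
     (basis_elem Q \<gamma> (src Q a, zs @ [b]) - g_minus Q n \<gamma> zs) \<beta> (w, ws)" for \<beta> w ws
  proof (cases "\<beta> \<in> Gamma Q n")
    case False
    then show ?thesis using G sn by (simp add: delta_def basis_app g_minus_def) blast
  next
    case True
    have lenb: "length \<beta> = n" using True Gamma_len by blast
    have bne: "\<beta> \<noteq> []" and tlbne: "tl \<beta> \<noteq> []" using lenb n2 by (auto simp: tl_Nil)
    have L: "lmult Q (hd \<beta>) (\<phi> (tl \<beta>)) (w, ws) =
       (-1) ^ n * (if tl \<beta> = butlast \<gamma> then cls Q (src Q (hd \<beta>), hd \<beta> # zs) (w, ws) else 0)"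
    proof (cases "tl \<beta> = butlast \<gamma>")
      case False
      then show ?thesis by (simp add: lmult_app \<phi>_def basis_app)
    next
      case True
      have tb: "tgt Q (hd \<beta>) = src Q a"
      proof -
        have "tgt Q (\<beta> ! 0) = src Q (\<beta> ! Suc 0)" using Gamma_nth[OF \<open>\<beta> \<in> Gamma Q n\<close>, of 0] n2 by simp
        moreover have "\<beta> ! Suc 0 = hd (tl \<beta>)" using tlbne by (cases \<beta>) (auto simp: hd_conv_nth)
        ultimately show ?thesis using True hb bne by (simp add: hd_conv_nth)
      qed
      have "nonzero_path Q (w, hd \<beta> # zs) \<Longrightarrow> nonzero_path Q (src Q a, zs)"
        using nz_suffix[OF tq, of w "hd \<beta>" zs] tb by simp
      moreover have "lmult Q (hd \<beta>) (\<phi> (tl \<beta>)) (w, ws) = (-1) ^ n * (if nonzero_path Q (w, ws) \<and> ws \<noteq> [] \<and> hd ws = hd \<beta>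
          then cls Q (src Q a, zs) (tgt Q (hd \<beta>), tl ws) else 0)"
        by (simp add: lmult_app \<phi>_def basis_app True)
      ultimately show ?thesis using True tb nzz
        by (cases ws) (auto simp: cls_app dest: nz_hd)
    qed
    have R: "rmult Q (\<phi> (butlast \<beta>)) (last \<beta>) (w, ws) =
       (-1) ^ n * basis_elem Q \<gamma> (src Q a, zs @ [b]) \<beta> (w, ws)"
    proof (cases "\<beta> = \<gamma>")
      case True
      have e: "rmult Q (\<phi> (butlast \<beta>)) (last \<beta>) (w, ws) = (-1) ^ n * (if nonzero_path Q (w, ws) \<and> ws \<noteq> [] \<and> last ws = b
          then cls Q (src Q a, zs) (w, butlast ws) else 0)"
        by (simp add: rmult_app \<phi>_def basis_app True b_def)
      show ?thesis
      proof (cases ws rule: rev_cases)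
        case Nil
        then show ?thesis using e by (simp add: cls_app basis_app)
      next
        case (snoc ws' z)
        then show ?thesis using e True nz nzz by (auto simp: cls_app basis_app)
      qed
    next
      case False
      show ?thesis
      proof (cases "butlast \<beta> = butlast \<gamma>")
        case False
        then show ?thesis using \<open>\<beta> \<noteq> \<gamma>\<close> by (simp add: rmult_app \<phi>_def basis_app)
      next
        case True
        have lb: "last \<beta> \<noteq> b" using True \<open>\<beta> \<noteq> \<gamma>\<close> bne gne b_def by (metis append_butlast_last_id)
        have "\<not> nonzero_path Q (src Q a, zs @ [last \<beta>])"
        proof
          assume nb: "nonzero_path Q (src Q a, zs @ [last \<beta>])"
          have c1: "tgt Q (last zs) = src Q (last \<beta>) \<and> (last zs, last \<beta>) \<notin> rels Q"
            using nz_snoc2[OF nb zsne] by simp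
          have "last \<beta> \<in> arrs Q" using nb unfolding nonzero_path_def is_path_def by auto
          moreover have "b \<in> arrs Q" using nz unfolding nonzero_path_def is_path_def by auto
          ultimately have "last \<beta> = b" using S3_right[OF tq, of "last zs" "last \<beta>" b] lz c1 by blast
          then show False using lb by simp
        qed
        moreover have "rmult Q (\<phi> (butlast \<beta>)) (last \<beta>) (w, ws) = (-1) ^ n * (if nonzero_path Q (w, ws) \<and> ws \<noteq> [] \<and> last ws = last \<beta>
          then cls Q (src Q a, zs) (w, butlast ws) else 0)"
          by (simp add: rmult_app \<phi>_def basis_app True)
        ultimately show ?thesis using \<open>\<beta> \<noteq> \<gamma>\<close>
          by (cases ws rule: rev_cases) (auto simp: cls_app basis_app)
      qed
    qed
    have sq: "(-1::'k) ^ n * (-1) ^ n = 1" by (simp flip: power_add)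
    have sq2: "(-1::'k) ^ (n + 1) = - ((-1) ^ n)" by simp
    show ?thesis
      using True L R sn
      by (simp add: delta_def g_minus_def mult.assoc[symmetric] sq sq2)
  qed
  have "delta Q (n - 1) \<phi> = basis_elem Q \<gamma> (src Q a, zs @ [b]) - g_minus Q n \<gamma> zs"
  proof (intro ext)
    fix \<beta> :: "'a list" and q :: "'v \<times> 'a list"
    obtain w ws where "q = (w, ws)" by (cases q)
    then show "delta Q (n - 1) \<phi> \<beta> q = (basis_elem Q \<gamma> (src Q a, zs @ [b]) - g_minus Q n \<gamma> zs) \<beta> q"
      using main by simp
  qed
  then show ?thesis unfolding in_image_delta_def using coch a_def b_def by blast
qed


theorem lemma2p1:
  fixes Q :: "('v, 'a) bquiver" and n :: nat
  assumes "tqsa Q" and "2 \<le> n"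
  shows "(\<forall>\<gamma> ys. in_Bminus Q n \<gamma> ys \<longrightarrow>
            in_image_delta Q n
              ((basis_elem Q \<gamma> (src Q (hd \<gamma>), hd \<gamma> # ys) :: 'a list \<Rightarrow> 'v \<times> 'a list \<Rightarrow> 'k::field)
               - f_plus Q n \<gamma> ys))
       \<and> (\<forall>\<gamma> zs. in_Bplus Q n \<gamma> zs \<longrightarrow>
            in_image_delta Q n
              ((basis_elem Q \<gamma> (src Q (hd \<gamma>), zs @ [last \<gamma>]) :: 'a list \<Rightarrow> 'v \<times> 'a list \<Rightarrow> 'k)
               - g_minus Q n \<gamma> zs))"
  using partA[OF assms] partB[OF assms] by blast

end
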